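(* Let $T<\infty$ and $\Delta_T=\{(s,t):0\le t\le s\le T\}$. There exists at most one solution $(R,C,q,K,H)\in\mathcal C_b^1(\Delta_T)^2\times\mathcal C_b^1([0,T])^3$ (with $C$ extended to $[0,T]^2$ by $C(s,t)=C(t,s)$) of the equations, for $(s,t)\in\Delta_T$, \begin{align*} \partial_sR(s,t)&=-f'(K(s))R(s,t)+\int_t^sR(u,t)R(s,u)\nu''(C(s,u))du,\\ \partial_sC(s,t)&=-f'(K(s))C(s,t)+\int_0^sR(s,u)\Big[\nu''(C(s,u))C(u,t)-\frac{q(t)\nu'(q(u))\nu''(q(s))}{\nu'(q_\star^2)}\Big]du\\&\quad+\int_0^tR(t,u)\Big[\nu'(C(s,u))-\frac{\nu'(q(s))\nu'(q(u))}{\nu'(q_\star^2)}\Big]du+q(t){\mathsf v}_\star'(q(s)),\\ \partial_sq(s)&=-f'(K(s))q(s)+\int_0^sR(s,u)\Big[q(u)\nu''(C(s,u))-\frac{q_\star^2\nu'(q(u))\nu''(q(s))}{\nu'(q_\star^2)}\Big]du+q_\star^2{\mathsf v}_\star'(q(s)),\\ \partial_sK(s)&=1-2f'(K(s))K(s)+2\int_0^sR(s,u)\Big[\psi(C(s,u))-\frac{\psi(q(s))\nu'(q(u))}{\nu'(q_\star^2)}\Big]du+2q(s){\mathsf v}_\star'(q(s)),\\ H(s)&=\int_0^sR(s,u)\Big[\nu'(C(s,u))-\frac{\nu'(q(s))\nu'(q(u))}{\nu'(q_\star^2)}\Big]du+{\mathsf v}_\star(q(s)), \end{align*} with boundary conditions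 $R(s,s)=1$ and $C(s,s)=K(s)$ for all $s\in[0,T]$, and $K(0)=1$, $q(0)=q_o$ given.
   Context: $m\ge2$, $b_2,\dots,b_m$ real with $b_m\ne0$, $\nu(r)=\sum_{p=2}^mb_p^2r^p$, $\psi(r)=r\nu''(r)+\nu'(r)$; $q_\star>0$, $q_o$ a real number, $E_\star,G_\star$ reals (with $G_\star=mE_\star/q_\star^2$ if $\nu(r)=b_m^2r^m$, the pure case). In the mixed case (any other $\nu$) ${\mathsf v}_p=\begin{bmatrix}q_\star^2\nu(q_\star^2)&q_\star^2\nu'(q_\star^2)\\ q_\star^2\nu'(q_\star^2)&\psi(q_\star^2)\end{bmatrix}^{-1}\begin{bmatrix}q_\star^2\\ p\end{bmatrix}$ and ${\mathsf v}_\star(r)=\sum_{p=2}^mb_p^2\langle{\mathsf v}_p,(E_\star,G_\star)\rangle r^p$; in the pure case ${\mathsf v}_\star(r)=E_\star q_\star^{-2m}r^m$. $f:[0,\infty)\to\mathbb R$ is differentiable with $f'$ locally Lipschitz, $\inf_{r\ge0}\{f'(r)-Ar^{2k-1}\}>-\infty$ for some $A>0,k>m/4$, and $\sup_r|f'(r)|(1+r)^{-\kappa}<\infty$ for some $\kappa$. $\mathcal C_b^1$ denotes bounded continuously differentiable functions. *)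

theory Defs
  imports "HOL-Analysis.Analysis"
begin

definition nu :: "nat \<Rightarrow> (nat \<Rightarrow> real) \<Rightarrow> real \<Rightarrow> real" where
  "nu m b r = (\<Sum>p=2..m. (b p)^2 * r^p)"

definition nu1 :: "nat \<Rightarrow> (nat \<Rightarrow> real) \<Rightarrow> real \<Rightarrow> real" where
  "nu1 m b r = (\<Sum>p=2..m. (b p)^2 * real p * r^(p - 1))"

definition nu2 :: "nat \<Rightarrow> (nat \<Rightarrow> real) \<Rightarrow> real \<Rightarrow> real" where
  "nu2 m b r = (\<Sum>p=2..m. (b p)^2 * real p * (real p - 1) * r^(p - 2))"

definition psi :: "nat \<Rightarrow> (nat \<Rightarrow> real) \<Rightarrow> real \<Rightarrow> real" where
  "psi m b r = r * nu2 m b r + nu1 m b r"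

definition pure_case :: "nat \<Rightarrow> (nat \<Rightarrow> real) \<Rightarrow> bool" where
  "pure_case m b \<longleftrightarrow> (\<forall>p\<in>{2..<m}. b p = 0)"

text \<open>Mixed case: v_p = M^{-1} (qs^2, p) with
  M = [[qs^2 nu(qs^2), qs^2 nu'(qs^2)], [qs^2 nu'(qs^2), psi(qs^2)]];
  the 2x2 inverse is written out via the adjugate formula.
  vcoef gives the inner product of v_p with (E, G).\<close>
definition vcoef :: "nat \<Rightarrow> (nat \<Rightarrow> real) \<Rightarrow> real \<Rightarrow> real \<Rightarrow> real \<Rightarrow> nat \<Rightarrow> real" where
  "vcoef m b qs E G p =
    (let x = qs^2; a = x * nu m b x; c = x * nu1 m b x; d = psi m b x;
         dt = a * d - c * c;
         v1 = (d * x - c * real p) / dt;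
         v2 = (- c * x + a * real p) / dt
     in v1 * E + v2 * G)"

definition vstar :: "nat \<Rightarrow> (nat \<Rightarrow> real) \<Rightarrow> real \<Rightarrow> real \<Rightarrow> real \<Rightarrow> real \<Rightarrow> real" where
  "vstar m b qs E G r =
    (if pure_case m b then E / qs^(2*m) * r^m
     else (\<Sum>p=2..m. (b p)^2 * vcoef m b qs E G p * r^p))"

definition vstar1 :: "nat \<Rightarrow> (nat \<Rightarrow> real) \<Rightarrow> real \<Rightarrow> real \<Rightarrow> real \<Rightarrow> real \<Rightarrow> real" where
  "vstar1 m b qs E G r =
    (if pure_case m b then E / qs^(2*m) * real m * r^(m - 1)
     else (\<Sum>p=2..m. (b p)^2 * vcoef m b qs E G p * real p * r^(p - 1)))"

definition triangle :: "real \<Rightarrow> (real \<times> real) set" where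
  "triangle T = {(s, t). 0 \<le> t \<and> t \<le> s \<and> s \<le> T}"

text \<open>Bounded continuously differentiable functions on a set of the plane
  (derivatives within the set, so one-sided at the boundary).\<close>
definition Cb1_plane :: "(real \<times> real) set \<Rightarrow> (real \<Rightarrow> real \<Rightarrow> real) \<Rightarrow> bool" where
  "Cb1_plane S F \<longleftrightarrow>
     (\<exists>F1 F2. continuous_on S F1 \<and> continuous_on S F2 \<and>
        (\<forall>x\<in>S. ((\<lambda>(s, t). F s t) has_derivative (\<lambda>h. F1 x * fst h + F2 x * snd h)) (at x within S)))
     \<and> bounded ((\<lambda>(s, t). F s t) ` S)"

definition Cb1_line :: "real set \<Rightarrow> (real \<Rightarrow> real) \<Rightarrow> bool" where
  "Cb1_line S F \<longleftrightarrow>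
     (\<exists>F'. continuous_on S F' \<and> (\<forall>x\<in>S. (F has_real_derivative F' x) (at x within S)))
     \<and> bounded (F ` S)"

definition Csym :: "(real \<Rightarrow> real \<Rightarrow> real) \<Rightarrow> real \<Rightarrow> real \<Rightarrow> real" where
  "Csym C s t = (if t \<le> s then C s t else C t s)"

definition is_solution ::
  "nat \<Rightarrow> (nat \<Rightarrow> real) \<Rightarrow> real \<Rightarrow> real \<Rightarrow> real \<Rightarrow> (real \<Rightarrow> real) \<Rightarrow> real \<Rightarrow> real \<Rightarrow>
   (real \<Rightarrow> real \<Rightarrow> real) \<Rightarrow> (real \<Rightarrow> real \<Rightarrow> real) \<Rightarrow> (real \<Rightarrow> real) \<Rightarrow> (real \<Rightarrow> real) \<Rightarrow> (real \<Rightarrow> real) \<Rightarrow> bool"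
  where
  "is_solution m b qs E G f' T qo R C q K H \<longleftrightarrow>
    (let D = nu1 m b (qs^2) in
     Cb1_plane (triangle T) R \<and> Cb1_plane (triangle T) C \<and>
     Cb1_line {0..T} q \<and> Cb1_line {0..T} K \<and> Cb1_line {0..T} H \<and>
     (\<forall>s\<in>{0..T}. 0 \<le> K s) \<and>
     (\<forall>(s, t)\<in>triangle T.
        ((\<lambda>s'. R s' t) has_real_derivative
           (- f' (K s) * R s t + integral {t..s} (\<lambda>u. R u t * R s u * nu2 m b (C s u))))
          (at s within {t..T}) \<and>
        ((\<lambda>s'. C s' t) has_real_derivative
           (- f' (K s) * C s t
            + integral {0..s} (\<lambda>u. R s u * (nu2 m b (C s u) * Csym C u t
                                   - q t * nu1 m b (q u) * nu2 m b (q s) / D))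
            + integral {0..t} (\<lambda>u. R t u * (nu1 m b (C s u) - nu1 m b (q s) * nu1 m b (q u) / D))
            + q t * vstar1 m b qs E G (q s)))
          (at s within {t..T})) \<and>
     (\<forall>s\<in>{0..T}.
        (q has_real_derivative
           (- f' (K s) * q s
            + integral {0..s} (\<lambda>u. R s u * (q u * nu2 m b (C s u)
                                   - qs^2 * nu1 m b (q u) * nu2 m b (q s) / D))
            + qs^2 * vstar1 m b qs E G (q s)))
          (at s within {0..T}) \<and>
        (K has_real_derivative
           (1 - 2 * f' (K s) * K s
            + 2 * integral {0..s} (\<lambda>u. R s u * (psi m b (C s u) - psi m b (q s) * nu1 m b (q u) / D))
            + 2 * q s * vstar1 m b qs E G (q s)))
          (at s within {0..T}) \<and>
        H s = integral {0..s} (\<lambda>u. R s u * (nu1 m b (C s u) - nu1 m b (q s) * nu1 m b (q u) / D))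
              + vstar m b qs E G (q s) \<and>
        R s s = 1 \<and> C s s = K s) \<and>
     K 0 = 1 \<and> q 0 = qo)"

end

theory Submission
  imports Defs
begin


definition LL :: "(real \<Rightarrow> real) \<Rightarrow> bool" where
  "LL g \<longleftrightarrow> (\<forall>A. \<exists>L\<ge>0. \<forall>x y. \<bar>x\<bar> \<le> A \<longrightarrow> \<bar>y\<bar> \<le> A \<longrightarrow> \<bar>g x - g y\<bar> \<le> L * \<bar>x - y\<bar>)"

lemma LL_bound:
  assumes "LL g" shows "\<exists>Bd\<ge>0. \<forall>x. \<bar>x\<bar> \<le> A \<longrightarrow> \<bar>g x\<bar> \<le> Bd"
proof -
  obtain L where L: "L \<ge> 0" "\<And>x y. \<bar>x\<bar> \<le> \<bar>A\<bar> \<Longrightarrow> \<bar>y\<bar> \<le> \<bar>A\<bar> \<Longrightarrow> \<bar>g x - g y\<bar> \<le> L * \<bar>x - y\<bar>"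
    using assms unfolding LL_def by meson
  have "\<bar>g x\<bar> \<le> \<bar>g 0\<bar> + L * \<bar>A\<bar>" if "\<bar>x\<bar> \<le> A" for x
  proof -
    have "\<bar>g x - g 0\<bar> \<le> L * \<bar>x - 0\<bar>" using L(2)[of x 0] that by auto
    also have "\<dots> \<le> L * \<bar>A\<bar>" using that L(1) by (intro mult_left_mono) auto
    finally show ?thesis by linarith
  qed
  then show ?thesis by (intro exI[of _ "\<bar>g 0\<bar> + L * \<bar>A\<bar>"]) (auto simp: L(1))
qed

lemma LL_const: "LL (\<lambda>x. c)"
  unfolding LL_def by (auto intro: exI[of _ 0])

lemma LL_id: "LL (\<lambda>x. x)"
  unfolding LL_def by (auto intro: exI[of _ 1])

lemma LL_add: "LL f \<Longrightarrow> LL g \<Longrightarrow> LL (\<lambda>x. f x + g x)"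
  unfolding LL_def
proof (intro allI)
  fix A assume f: "\<forall>A. \<exists>L\<ge>0. \<forall>x y. \<bar>x\<bar> \<le> A \<longrightarrow> \<bar>y\<bar> \<le> A \<longrightarrow> \<bar>f x - f y\<bar> \<le> L * \<bar>x - y\<bar>"
    and g: "\<forall>A. \<exists>L\<ge>0. \<forall>x y. \<bar>x\<bar> \<le> A \<longrightarrow> \<bar>y\<bar> \<le> A \<longrightarrow> \<bar>g x - g y\<bar> \<le> L * \<bar>x - y\<bar>"
  obtain L1 where L1: "L1 \<ge> 0" "\<forall>x y. \<bar>x\<bar> \<le> A \<longrightarrow> \<bar>y\<bar> \<le> A \<longrightarrow> \<bar>f x - f y\<bar> \<le> L1 * \<bar>x - y\<bar>" using f by blast
  obtain L2 where L2: "L2 \<ge> 0" "\<forall>x y. \<bar>x\<bar> \<le> A \<longrightarrow> \<bar>y\<bar> \<le> A \<longrightarrow> \<bar>g x - g y\<bar> \<le> L2 * \<bar>x - y\<bar>" using g by blast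
  show "\<exists>L\<ge>0. \<forall>x y. \<bar>x\<bar> \<le> A \<longrightarrow> \<bar>y\<bar> \<le> A \<longrightarrow> \<bar>f x + g x - (f y + g y)\<bar> \<le> L * \<bar>x - y\<bar>"
  proof (intro exI[of _ "L1 + L2"] conjI allI impI)
    fix x y assume "\<bar>x\<bar> \<le> A" "\<bar>y\<bar> \<le> A"
    then have "\<bar>f x - f y\<bar> \<le> L1 * \<bar>x - y\<bar>" "\<bar>g x - g y\<bar> \<le> L2 * \<bar>x - y\<bar>" using L1 L2 by auto
    then show "\<bar>f x + g x - (f y + g y)\<bar> \<le> (L1 + L2) * \<bar>x - y\<bar>" by (simp add: algebra_simps)
  qed (use L1 L2 in auto)
qed

lemma prod_diff_bound:
  fixes x1 x2 y1 y2 :: real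
  assumes "\<bar>x1\<bar> \<le> A" "\<bar>y2\<bar> \<le> B" "\<bar>x1 - x2\<bar> \<le> e1" "\<bar>y1 - y2\<bar> \<le> e2"
  shows "\<bar>x1 * y1 - x2 * y2\<bar> \<le> A * e2 + B * e1"
proof -
  have "x1 * y1 - x2 * y2 = x1 * (y1 - y2) + (x1 - x2) * y2" by algebra
  then have "\<bar>x1 * y1 - x2 * y2\<bar> \<le> \<bar>x1\<bar> * \<bar>y1 - y2\<bar> + \<bar>x1 - x2\<bar> * \<bar>y2\<bar>"
    by (metis abs_mult abs_triangle_ineq)
  also have "\<dots> \<le> A * e2 + e1 * B"
    by (intro add_mono mult_mono) (use assms in auto)
  finally show ?thesis by (simp add: mult.commute)
qed

lemma LL_mult: assumes "LL f" "LL g" shows "LL (\<lambda>x. f x * g x)"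
  unfolding LL_def
proof (intro allI)
  fix A
  obtain L1 where L1: "L1 \<ge> 0" "\<forall>x y. \<bar>x\<bar> \<le> A \<longrightarrow> \<bar>y\<bar> \<le> A \<longrightarrow> \<bar>f x - f y\<bar> \<le> L1 * \<bar>x - y\<bar>" using assms(1) unfolding LL_def by blast
  obtain L2 where L2: "L2 \<ge> 0" "\<forall>x y. \<bar>x\<bar> \<le> A \<longrightarrow> \<bar>y\<bar> \<le> A \<longrightarrow> \<bar>g x - g y\<bar> \<le> L2 * \<bar>x - y\<bar>" using assms(2) unfolding LL_def by blast
  obtain B1 where B1: "B1 \<ge> 0" "\<forall>x. \<bar>x\<bar> \<le> A \<longrightarrow> \<bar>f x\<bar> \<le> B1" using LL_bound[OF assms(1)] by blast
  obtain B2 where B2: "B2 \<ge> 0" "\<forall>x. \<bar>x\<bar> \<le> A \<longrightarrow> \<bar>g x\<bar> \<le> B2" using LL_bound[OF assms(2)] by blast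
  show "\<exists>L\<ge>0. \<forall>x y. \<bar>x\<bar> \<le> A \<longrightarrow> \<bar>y\<bar> \<le> A \<longrightarrow> \<bar>f x * g x - f y * g y\<bar> \<le> L * \<bar>x - y\<bar>"
  proof (intro exI[of _ "B1 * L2 + B2 * L1"] conjI allI impI)
    fix x y assume xy: "\<bar>x\<bar> \<le> A" "\<bar>y\<bar> \<le> A"
    have "\<bar>f x * g x - f y * g y\<bar> \<le> B1 * (L2 * \<bar>x - y\<bar>) + B2 * (L1 * \<bar>x - y\<bar>)"
      by (rule prod_diff_bound) (use xy L1 L2 B1 B2 in auto)
    then show "\<bar>f x * g x - f y * g y\<bar> \<le> (B1 * L2 + B2 * L1) * \<bar>x - y\<bar>" by (simp add: algebra_simps)
  qed (use L1 L2 B1 B2 in auto)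
qed

lemma LL_power: "LL (\<lambda>x. x ^ n)"
  by (induction n) (auto intro: LL_const LL_mult LL_id)

lemma LL_sum: "finite S \<Longrightarrow> (\<And>p. p \<in> S \<Longrightarrow> LL (g p)) \<Longrightarrow> LL (\<lambda>x. \<Sum>p\<in>S. g p x)"
  by (induction S rule: finite_induct) (auto intro: LL_const LL_add)

lemma LL_divc: "LL f \<Longrightarrow> LL (\<lambda>x. f x / c)"
  using LL_mult[OF _ LL_const, of f "1/c"] by simp

lemma LL_nu1: "LL (nu1 m b)"
  unfolding nu1_def by (intro LL_sum LL_mult LL_const LL_power) auto

lemma LL_nu2: "LL (nu2 m b)"
  unfolding nu2_def by (intro LL_sum LL_mult LL_const LL_power) auto

lemma LL_psi: "LL (psi m b)"
  unfolding psi_def by (intro LL_add LL_mult LL_id LL_nu1 LL_nu2)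

lemma LL_vstar1: "LL (vstar1 m b qs E G)"
  unfolding vstar1_def by (cases "pure_case m b") (auto intro!: LL_sum LL_mult LL_const LL_power LL_divc)



definition Good :: "(real \<Rightarrow> 'i set) \<Rightarrow> ('i \<Rightarrow> real) \<Rightarrow> ('i \<Rightarrow> real) \<Rightarrow> bool" where
  "Good S X Y \<longleftrightarrow> (\<exists>A\<ge>0. \<exists>L\<ge>0. \<forall>M\<ge>0. \<forall>i\<in>S M. \<bar>X i\<bar> \<le> A \<and> \<bar>Y i\<bar> \<le> A \<and> \<bar>X i - Y i\<bar> \<le> L * M)"

lemma GoodI:
  assumes "A \<ge> 0" "L \<ge> 0" "\<And>M i. M \<ge> 0 \<Longrightarrow> i \<in> S M \<Longrightarrow> \<bar>X i\<bar> \<le> A \<and> \<bar>Y i\<bar> \<le> A \<and> \<bar>X i - Y i\<bar> \<le> L * M"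
  shows "Good S X Y"
  using assms unfolding Good_def by blast

lemma GoodE:
  assumes "Good S X Y"
  obtains A L where "A \<ge> 0" "L \<ge> 0" "\<And>M i. M \<ge> 0 \<Longrightarrow> i \<in> S M \<Longrightarrow> \<bar>X i\<bar> \<le> A \<and> \<bar>Y i\<bar> \<le> A \<and> \<bar>X i - Y i\<bar> \<le> L * M"
  using assms unfolding Good_def by blast

lemma good_const: "Good S (\<lambda>i. c) (\<lambda>i. c)"
  by (rule GoodI[of "\<bar>c\<bar>" 0]) auto

lemma good_add:
  assumes "Good S X1 Y1" "Good S X2 Y2"
  shows "Good S (\<lambda>i. X1 i + X2 i) (\<lambda>i. Y1 i + Y2 i)"
proof -
  obtain A1 L1 where 1: "A1 \<ge> 0" "L1 \<ge> 0" "\<And>M i. M \<ge> 0 \<Longrightarrow> i \<in> S M \<Longrightarrow> \<bar>X1 i\<bar> \<le> A1 \<and> \<bar>Y1 i\<bar> \<le> A1 \<and> \<bar>X1 i - Y1 i\<bar> \<le> L1 * M"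
    using GoodE[OF assms(1)] by blast
  obtain A2 L2 where 2: "A2 \<ge> 0" "L2 \<ge> 0" "\<And>M i. M \<ge> 0 \<Longrightarrow> i \<in> S M \<Longrightarrow> \<bar>X2 i\<bar> \<le> A2 \<and> \<bar>Y2 i\<bar> \<le> A2 \<and> \<bar>X2 i - Y2 i\<bar> \<le> L2 * M"
    using GoodE[OF assms(2)] by blast
  show ?thesis
  proof (rule GoodI[of "A1 + A2" "L1 + L2"])
    fix M i assume "M \<ge> 0" "i \<in> S M"
    from 1(3)[OF this] 2(3)[OF this] show "\<bar>X1 i + X2 i\<bar> \<le> A1 + A2 \<and> \<bar>Y1 i + Y2 i\<bar> \<le> A1 + A2 \<and> \<bar>X1 i + X2 i - (Y1 i + Y2 i)\<bar> \<le> (L1 + L2) * M"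
      by (auto simp: algebra_simps)
  qed (use 1 2 in auto)
qed

lemma good_minus:
  assumes "Good S X Y" shows "Good S (\<lambda>i. - X i) (\<lambda>i. - Y i)"
proof -
  obtain A L where 1: "A \<ge> 0" "L \<ge> 0" "\<And>M i. M \<ge> 0 \<Longrightarrow> i \<in> S M \<Longrightarrow> \<bar>X i\<bar> \<le> A \<and> \<bar>Y i\<bar> \<le> A \<and> \<bar>X i - Y i\<bar> \<le> L * M"
    using GoodE[OF assms] by blast
  show ?thesis
    by (rule GoodI[of A L]) (use 1 in \<open>auto simp: abs_minus_commute\<close>)
qed

lemma good_diff:
  assumes "Good S X1 Y1" "Good S X2 Y2"
  shows "Good S (\<lambda>i. X1 i - X2 i) (\<lambda>i. Y1 i - Y2 i)"
  using good_add[OF assms(1) good_minus[OF assms(2)]] by simp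

lemma good_mult:
  assumes "Good S X1 Y1" "Good S X2 Y2"
  shows "Good S (\<lambda>i. X1 i * X2 i) (\<lambda>i. Y1 i * Y2 i)"
proof -
  obtain A1 L1 where 1: "A1 \<ge> 0" "L1 \<ge> 0" "\<And>M i. M \<ge> 0 \<Longrightarrow> i \<in> S M \<Longrightarrow> \<bar>X1 i\<bar> \<le> A1 \<and> \<bar>Y1 i\<bar> \<le> A1 \<and> \<bar>X1 i - Y1 i\<bar> \<le> L1 * M"
    using GoodE[OF assms(1)] by blast
  obtain A2 L2 where 2: "A2 \<ge> 0" "L2 \<ge> 0" "\<And>M i. M \<ge> 0 \<Longrightarrow> i \<in> S M \<Longrightarrow> \<bar>X2 i\<bar> \<le> A2 \<and> \<bar>Y2 i\<bar> \<le> A2 \<and> \<bar>X2 i - Y2 i\<bar> \<le> L2 * M"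
    using GoodE[OF assms(2)] by blast
  show ?thesis
  proof (rule GoodI[of "A1 * A2" "A1 * L2 + A2 * L1"])
    fix M i assume Mi: "M \<ge> 0" "i \<in> S M"
    note a = 1(3)[OF Mi] 2(3)[OF Mi]
    have "\<bar>X1 i * X2 i - Y1 i * Y2 i\<bar> \<le> A1 * (L2 * M) + A2 * (L1 * M)"
      by (rule prod_diff_bound) (use a in auto)
    moreover have "\<bar>X1 i * X2 i\<bar> \<le> A1 * A2" "\<bar>Y1 i * Y2 i\<bar> \<le> A1 * A2"
      using a by (auto simp: abs_mult intro!: mult_mono)
    ultimately show "\<bar>X1 i * X2 i\<bar> \<le> A1 * A2 \<and> \<bar>Y1 i * Y2 i\<bar> \<le> A1 * A2 \<and> \<bar>X1 i * X2 i - Y1 i * Y2 i\<bar> \<le> (A1 * L2 + A2 * L1) * M"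
      by (simp add: algebra_simps)
  qed (use 1 2 in auto)
qed

lemma good_divc:
  assumes "Good S X Y" shows "Good S (\<lambda>i. X i / c) (\<lambda>i. Y i / c)"
  using good_mult[OF assms good_const[of S "1/c"]] by simp

lemma good_LL:
  assumes "LL g" "Good S X Y"
  shows "Good S (\<lambda>i. g (X i)) (\<lambda>i. g (Y i))"
proof -
  obtain A L where 1: "A \<ge> 0" "L \<ge> 0" "\<And>M i. M \<ge> 0 \<Longrightarrow> i \<in> S M \<Longrightarrow> \<bar>X i\<bar> \<le> A \<and> \<bar>Y i\<bar> \<le> A \<and> \<bar>X i - Y i\<bar> \<le> L * M"
    using GoodE[OF assms(2)] by blast
  obtain Lg where Lg: "Lg \<ge> 0" "\<forall>x y. \<bar>x\<bar> \<le> A \<longrightarrow> \<bar>y\<bar> \<le> A \<longrightarrow> \<bar>g x - g y\<bar> \<le> Lg * \<bar>x - y\<bar>"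
    using assms(1) unfolding LL_def by blast
  obtain Bg where Bg: "Bg \<ge> 0" "\<forall>x. \<bar>x\<bar> \<le> A \<longrightarrow> \<bar>g x\<bar> \<le> Bg" using LL_bound[OF assms(1)] by blast
  show ?thesis
  proof (rule GoodI[of Bg "Lg * L"])
    fix M i assume Mi: "M \<ge> 0" "i \<in> S M"
    note a = 1(3)[OF Mi]
    have "\<bar>g (X i) - g (Y i)\<bar> \<le> Lg * \<bar>X i - Y i\<bar>" using Lg a by auto
    also have "\<dots> \<le> Lg * (L * M)" using a Lg(1) by (intro mult_left_mono) auto
    finally show "\<bar>g (X i)\<bar> \<le> Bg \<and> \<bar>g (Y i)\<bar> \<le> Bg \<and> \<bar>g (X i) - g (Y i)\<bar> \<le> Lg * L * M"
      using Bg a by (simp add: mult.assoc)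
  qed (use 1 Lg Bg in auto)
qed

lemma good_fp:
  assumes lip: "\<forall>Rr. \<exists>L. L-lipschitz_on {0..Rr} fp" and "Good S X Y"
    and nn: "\<And>M i. M \<ge> 0 \<Longrightarrow> i \<in> S M \<Longrightarrow> X i \<ge> 0 \<and> Y i \<ge> 0"
  shows "Good S (\<lambda>i. fp (X i)) (\<lambda>i. fp (Y i))"
proof -
  obtain A L where 1: "A \<ge> 0" "L \<ge> 0" "\<And>M i. M \<ge> 0 \<Longrightarrow> i \<in> S M \<Longrightarrow> \<bar>X i\<bar> \<le> A \<and> \<bar>Y i\<bar> \<le> A \<and> \<bar>X i - Y i\<bar> \<le> L * M"
    using GoodE[OF assms(2)] by blast
  obtain Lg where "Lg-lipschitz_on {0..A} fp" using lip by blast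
  then have Lg: "Lg \<ge> 0" "\<And>x y. x \<in> {0..A} \<Longrightarrow> y \<in> {0..A} \<Longrightarrow> \<bar>fp x - fp y\<bar> \<le> Lg * \<bar>x - y\<bar>"
    unfolding lipschitz_on_def dist_real_def by auto
  have bnd: "\<bar>fp x\<bar> \<le> \<bar>fp 0\<bar> + Lg * A" if "x \<in> {0..A}" for x
  proof -
    have "\<bar>fp x - fp 0\<bar> \<le> Lg * \<bar>x - 0\<bar>" using Lg(2)[OF that, of 0] 1(1) by auto
    also have "\<dots> \<le> Lg * A" using that Lg(1) by (intro mult_left_mono) auto
    finally show ?thesis by linarith
  qed
  show ?thesis
  proof (rule GoodI[of "\<bar>fp 0\<bar> + Lg * A" "Lg * L"])
    fix M i assume Mi: "M \<ge> 0" "i \<in> S M"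
    note a = 1(3)[OF Mi] nn[OF Mi]
    have xy: "X i \<in> {0..A}" "Y i \<in> {0..A}" using a by auto
    have "\<bar>fp (X i) - fp (Y i)\<bar> \<le> Lg * \<bar>X i - Y i\<bar>" using Lg(2)[OF xy] .
    also have "\<dots> \<le> Lg * (L * M)" using a Lg(1) by (intro mult_left_mono) auto
    finally show "\<bar>fp (X i)\<bar> \<le> \<bar>fp 0\<bar> + Lg * A \<and> \<bar>fp (Y i)\<bar> \<le> \<bar>fp 0\<bar> + Lg * A \<and> \<bar>fp (X i) - fp (Y i)\<bar> \<le> Lg * L * M"
      using bnd[OF xy(1)] bnd[OF xy(2)] by (simp add: mult.assoc)
  qed (use 1 Lg in auto)
qed

lemma int_bound:
  fixes f :: "real \<Rightarrow> real"
  assumes "f integrable_on {a..b}" "\<And>v. v \<in> {a..b} \<Longrightarrow> \<bar>f v\<bar> \<le> B" "B \<ge> 0" "b - a \<le> W" "W \<ge> 0"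
  shows "\<bar>integral {a..b} f\<bar> \<le> B * W"
proof -
  have "norm (integral {a..b} f) \<le> B * (if a \<le> b then b - a else 0)"
    using has_integral_bound_real[of B "{}" f "integral {a..b} f" a b] assms by (auto simp: content_real_if integrable_integral)
  also have "\<dots> \<le> B * W"
    using assms by (intro mult_left_mono) auto
  finally show ?thesis by simp
qed

lemma good_int:
  fixes lo hi :: "'i \<Rightarrow> real"
  assumes "Good S' X Y" "W \<ge> 0"
    and cond: "\<And>M i. M \<ge> 0 \<Longrightarrow> i \<in> S M \<Longrightarrow> (\<forall>v\<in>{lo i..hi i}. sub i v \<in> S' M) \<and>
        (\<lambda>v. X (sub i v)) integrable_on {lo i..hi i} \<and> (\<lambda>v. Y (sub i v)) integrable_on {lo i..hi i} \<and> hi i - lo i \<le> W"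
  shows "Good S (\<lambda>i. integral {lo i..hi i} (\<lambda>v. X (sub i v))) (\<lambda>i. integral {lo i..hi i} (\<lambda>v. Y (sub i v)))"
proof -
  obtain A L where 1: "A \<ge> 0" "L \<ge> 0" "\<And>M i. M \<ge> 0 \<Longrightarrow> i \<in> S' M \<Longrightarrow> \<bar>X i\<bar> \<le> A \<and> \<bar>Y i\<bar> \<le> A \<and> \<bar>X i - Y i\<bar> \<le> L * M"
    using GoodE[OF assms(1)] by blast
  show ?thesis
  proof (rule GoodI[of "A * W" "L * W"])
    fix M i assume Mi: "M \<ge> 0" "i \<in> S M"
    note c = cond[OF Mi]
    have "\<bar>integral {lo i..hi i} (\<lambda>v. X (sub i v))\<bar> \<le> A * W"
      by (rule int_bound) (use c 1(3)[OF Mi(1)] 1(1) assms(2) in auto)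
    moreover have "\<bar>integral {lo i..hi i} (\<lambda>v. Y (sub i v))\<bar> \<le> A * W"
      by (rule int_bound) (use c 1(3)[OF Mi(1)] 1(1) assms(2) in auto)
    moreover have "\<bar>integral {lo i..hi i} (\<lambda>v. X (sub i v) - Y (sub i v))\<bar> \<le> (L * M) * W"
      by (rule int_bound) (use c 1(3)[OF Mi(1)] 1(2) Mi(1) assms(2) in \<open>auto intro: integrable_diff\<close>)
    moreover have "integral {lo i..hi i} (\<lambda>v. X (sub i v) - Y (sub i v)) = integral {lo i..hi i} (\<lambda>v. X (sub i v)) - integral {lo i..hi i} (\<lambda>v. Y (sub i v))"
      using c by (intro integral_diff) auto
    ultimately show "\<bar>integral {lo i..hi i} (\<lambda>v. X (sub i v))\<bar> \<le> A * W \<and> \<bar>integral {lo i..hi i} (\<lambda>v. Y (sub i v))\<bar> \<le> A * W \<and>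
      \<bar>integral {lo i..hi i} (\<lambda>v. X (sub i v)) - integral {lo i..hi i} (\<lambda>v. Y (sub i v))\<bar> \<le> L * W * M"
      by (simp add: algebra_simps)
  qed (use 1 assms(2) in auto)
qed

lemma good_mono:
  assumes "Good S' X Y" "\<And>M. M \<ge> 0 \<Longrightarrow> S M \<subseteq> S' M"
  shows "Good S X Y"
proof -
  obtain A L where 1: "A \<ge> 0" "L \<ge> 0" "\<And>M i. M \<ge> 0 \<Longrightarrow> i \<in> S' M \<Longrightarrow> \<bar>X i\<bar> \<le> A \<and> \<bar>Y i\<bar> \<le> A \<and> \<bar>X i - Y i\<bar> \<le> L * M"
    using GoodE[OF assms(1)] by blast
  show ?thesis by (rule GoodI[of A L]) (use 1 assms(2) in auto)
qed



lemma mvt_diff: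
  fixes ga gb :: "real \<Rightarrow> real" and da db :: "real \<Rightarrow> real"
  assumes "p \<le> x"
    and "\<And>s. s \<in> {p..x} \<Longrightarrow> (ga has_real_derivative da s) (at s within {p..x})"
    and "\<And>s. s \<in> {p..x} \<Longrightarrow> (gb has_real_derivative db s) (at s within {p..x})"
    and "\<And>s. s \<in> {p..x} \<Longrightarrow> \<bar>da s - db s\<bar> \<le> c"
  shows "\<bar>(ga x - gb x) - (ga p - gb p)\<bar> \<le> c * (x - p)"
proof -
  have "norm ((\<lambda>s. ga s - gb s) x - (\<lambda>s. ga s - gb s) p) \<le> c * norm (x - p)"
  proof (rule field_differentiable_bound[where S="{p..x}" and f'="\<lambda>s. da s - db s"])
    fix z assume "z \<in> {p..x}"
    then show "((\<lambda>s. ga s - gb s) has_field_derivative da z - db z) (at z within {p..x})"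
      using assms by (intro DERIV_diff) auto
  qed (use assms in auto)
  then show ?thesis using assms(1) by simp
qed

lemma Csym_eq: "Csym C u t = C (max u t) (min u t)"
  unfolding Csym_def by auto

locale one_sol =
  fixes m :: nat and b :: "nat \<Rightarrow> real" and qs E G T qo :: real and fp :: "real \<Rightarrow> real"
    and R C :: "real \<Rightarrow> real \<Rightarrow> real" and q K H :: "real \<Rightarrow> real"
  assumes sol: "is_solution m b qs E G fp T qo R C q K H"
begin

abbreviation "D \<equiv> nu1 m b (qs^2)"

lemma cb: "Cb1_plane (triangle T) R" "Cb1_plane (triangle T) C" "Cb1_line {0..T} q" "Cb1_line {0..T} K"
  using sol unfolding is_solution_def Let_def by auto

lemma Knn: "s \<in> {0..T} \<Longrightarrow> 0 \<le> K s"
  using sol unfolding is_solution_def Let_def by auto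

lemma init: "K 0 = 1" "q 0 = qo"
  using sol unfolding is_solution_def Let_def by auto

lemma diag: "s \<in> {0..T} \<Longrightarrow> R s s = 1" "s \<in> {0..T} \<Longrightarrow> C s s = K s"
  using sol unfolding is_solution_def Let_def by auto

lemma Heq: "s \<in> {0..T} \<Longrightarrow> H s = integral {0..s} (\<lambda>u. R s u * (nu1 m b (C s u) - nu1 m b (q s) * nu1 m b (q u) / D))
              + vstar m b qs E G (q s)"
  using sol unfolding is_solution_def Let_def by auto

lemma dR: "(s, t) \<in> triangle T \<Longrightarrow> ((\<lambda>s'. R s' t) has_real_derivative
           (- fp (K s) * R s t + integral {t..s} (\<lambda>u. R u t * R s u * nu2 m b (C s u))))
          (at s within {t..T})"
  using sol unfolding is_solution_def Let_def by auto

lemma dC: "(s, t) \<in> triangle T \<Longrightarrow> ((\<lambda>s'. C s' t) has_real_derivative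
           (- fp (K s) * C s t
            + integral {0..s} (\<lambda>u. R s u * (nu2 m b (C s u) * Csym C u t
                                   - q t * nu1 m b (q u) * nu2 m b (q s) / D))
            + integral {0..t} (\<lambda>u. R t u * (nu1 m b (C s u) - nu1 m b (q s) * nu1 m b (q u) / D))
            + q t * vstar1 m b qs E G (q s)))
          (at s within {t..T})"
  using sol unfolding is_solution_def Let_def by auto

lemma dq: "s \<in> {0..T} \<Longrightarrow> (q has_real_derivative
           (- fp (K s) * q s
            + integral {0..s} (\<lambda>u. R s u * (q u * nu2 m b (C s u)
                                   - qs^2 * nu1 m b (q u) * nu2 m b (q s) / D))
            + qs^2 * vstar1 m b qs E G (q s)))
          (at s within {0..T})"
  using sol unfolding is_solution_def Let_def by auto

lemma dK: "s \<in> {0..T} \<Longrightarrow> (K has_real_derivative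
           (1 - 2 * fp (K s) * K s
            + 2 * integral {0..s} (\<lambda>u. R s u * (psi m b (C s u) - psi m b (q s) * nu1 m b (q u) / D))
            + 2 * q s * vstar1 m b qs E G (q s)))
          (at s within {0..T})"
  using sol unfolding is_solution_def Let_def by auto

lemma cont_plane: "Cb1_plane S F \<Longrightarrow> continuous_on S (\<lambda>(s, t). F s t)"
  unfolding Cb1_plane_def by (auto intro: has_derivative_continuous_on)

lemma cont_line: "Cb1_line S F \<Longrightarrow> continuous_on S F"
  unfolding Cb1_line_def by (blast intro: DERIV_continuous_on)

lemma cont_tri:
  assumes "continuous_on (triangle T) (\<lambda>(x, y). F x y)" "continuous_on U a" "continuous_on U c"
    "\<And>u. u \<in> U \<Longrightarrow> (a u, c u) \<in> triangle T"
  shows "continuous_on U (\<lambda>u. F (a u) (c u))"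
proof -
  have "continuous_on U ((\<lambda>(x, y). F x y) \<circ> (\<lambda>u. (a u, c u)))"
    by (rule continuous_on_compose) (auto intro!: continuous_on_Pair assms continuous_on_subset[OF assms(1)])
  then show ?thesis by (simp add: o_def)
qed

lemma cR: "continuous_on U a \<Longrightarrow> continuous_on U c \<Longrightarrow> (\<And>u. u \<in> U \<Longrightarrow> (a u, c u) \<in> triangle T) \<Longrightarrow>
  continuous_on U (\<lambda>u. R (a u) (c u))"
  by (rule cont_tri[OF cont_plane[OF cb(1)]])

lemma cC: "continuous_on U a \<Longrightarrow> continuous_on U c \<Longrightarrow> (\<And>u. u \<in> U \<Longrightarrow> (a u, c u) \<in> triangle T) \<Longrightarrow>
  continuous_on U (\<lambda>u. C (a u) (c u))"
  by (rule cont_tri[OF cont_plane[OF cb(2)]])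

lemma cCsym: "continuous_on U a \<Longrightarrow> continuous_on U c \<Longrightarrow> (\<And>u. u \<in> U \<Longrightarrow> a u \<in> {0..T} \<and> c u \<in> {0..T}) \<Longrightarrow>
  continuous_on U (\<lambda>u. Csym C (a u) (c u))"
  unfolding Csym_eq
  by (rule cC) (auto intro!: continuous_intros simp: triangle_def)

lemma cq: "continuous_on U a \<Longrightarrow> (\<And>u. u \<in> U \<Longrightarrow> a u \<in> {0..T}) \<Longrightarrow> continuous_on U (\<lambda>u. q (a u))"
  using continuous_on_compose2[OF cont_line[OF cb(3)]] by blast

lemma cnu1: "continuous_on U a \<Longrightarrow> continuous_on U (\<lambda>u. nu1 m b (a u))"
  unfolding nu1_def by (intro continuous_intros)
lemma cnu2: "continuous_on U a \<Longrightarrow> continuous_on U (\<lambda>u. nu2 m b (a u))"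
  unfolding nu2_def by (intro continuous_intros)
lemma cpsi: "continuous_on U a \<Longrightarrow> continuous_on U (\<lambda>u. psi m b (a u))"
  unfolding psi_def by (intro continuous_intros cnu1 cnu2)

lemmas cI = cR cC cCsym cq cnu1 cnu2 cpsi

lemma intR: "(s, t) \<in> triangle T \<Longrightarrow> (\<lambda>u. R u t * R s u * nu2 m b (C s u)) integrable_on {t..s}"
  by (rule integrable_continuous_interval) ((unfold divide_inverse)?, auto intro!: continuous_intros cI simp: triangle_def)

lemma intC1: "(s, t) \<in> triangle T \<Longrightarrow> (\<lambda>u. R s u * (nu2 m b (C s u) * Csym C u t
                                   - q t * nu1 m b (q u) * nu2 m b (q s) / D)) integrable_on {0..s}"
  by (rule integrable_continuous_interval) ((unfold divide_inverse)?, auto intro!: continuous_intros cI simp: triangle_def)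

lemma intC2: "(s, t) \<in> triangle T \<Longrightarrow> (\<lambda>u. R t u * (nu1 m b (C s u) - nu1 m b (q s) * nu1 m b (q u) / D)) integrable_on {0..t}"
  by (rule integrable_continuous_interval) ((unfold divide_inverse)?, auto intro!: continuous_intros cI simp: triangle_def)

lemma intq: "s \<in> {0..T} \<Longrightarrow> (\<lambda>u. R s u * (q u * nu2 m b (C s u)
                                   - qs^2 * nu1 m b (q u) * nu2 m b (q s) / D)) integrable_on {0..s}"
  by (rule integrable_continuous_interval) ((unfold divide_inverse)?, auto intro!: continuous_intros cI simp: triangle_def)

lemma intK: "s \<in> {0..T} \<Longrightarrow> (\<lambda>u. R s u * (psi m b (C s u) - psi m b (q s) * nu1 m b (q u) / D)) integrable_on {0..s}"
  by (rule integrable_continuous_interval) ((unfold divide_inverse)?, auto intro!: continuous_intros cI simp: triangle_def)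

lemma bnd: "\<exists>B\<ge>0. (\<forall>s t. (s, t) \<in> triangle T \<longrightarrow> \<bar>R s t\<bar> \<le> B \<and> \<bar>C s t\<bar> \<le> B) \<and> (\<forall>s\<in>{0..T}. \<bar>q s\<bar> \<le> B \<and> \<bar>K s\<bar> \<le> B)"
proof -
  have "bounded ((\<lambda>(s, t). R s t) ` triangle T)" "bounded ((\<lambda>(s, t). C s t) ` triangle T)"
    "bounded (q ` {0..T})" "bounded (K ` {0..T})"
    using cb unfolding Cb1_plane_def Cb1_line_def by auto
  then obtain B1 B2 B3 B4 where
    "\<forall>x\<in>(\<lambda>(s, t). R s t) ` triangle T. norm x \<le> B1" "\<forall>x\<in>(\<lambda>(s, t). C s t) ` triangle T. norm x \<le> B2"
    "\<forall>x\<in>q ` {0..T}. norm x \<le> B3" "\<forall>x\<in>K ` {0..T}. norm x \<le> B4"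
    unfolding bounded_iff by metis
  then show ?thesis
    by (intro exI[of _ "\<bar>B1\<bar> + \<bar>B2\<bar> + \<bar>B3\<bar> + \<bar>B4\<bar>"]) force
qed

end



definition rR where "rR m b fp R C K s t = - fp (K s) * R s t + integral {t..s} (\<lambda>u. R u t * R s u * nu2 m b (C s u))"
definition rC where "rC m b qs E G fp R C q K s t =
           (- fp (K s) * C s t
            + integral {0..s} (\<lambda>u. R s u * (nu2 m b (C s u) * Csym C u t
                                   - q t * nu1 m b (q u) * nu2 m b (q s) / nu1 m b (qs^2)))
            + integral {0..t} (\<lambda>u. R t u * (nu1 m b (C s u) - nu1 m b (q s) * nu1 m b (q u) / nu1 m b (qs^2)))
            + q t * vstar1 m b qs E G (q s))"
definition rq where "rq m b qs E G fp R C q K s =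
           (- fp (K s) * q s
            + integral {0..s} (\<lambda>u. R s u * (q u * nu2 m b (C s u)
                                   - qs^2 * nu1 m b (q u) * nu2 m b (q s) / nu1 m b (qs^2)))
            + qs^2 * vstar1 m b qs E G (q s))"
definition rK where "rK m b qs E G fp R C q K s =
           (1 - 2 * fp (K s) * K s
            + 2 * integral {0..s} (\<lambda>u. R s u * (psi m b (C s u) - psi m b (q s) * nu1 m b (q u) / nu1 m b (qs^2)))
            + 2 * q s * vstar1 m b qs E G (q s))"

definition XR where "XR m b R C j = R (snd (snd j)) (fst (snd j)) * R (fst j) (snd (snd j)) * nu2 m b (C (fst j) (snd (snd j)))"
definition XC1 where "XC1 m b qs R C q j = R (fst j) (snd (snd j)) * (nu2 m b (C (fst j) (snd (snd j))) * Csym C (snd (snd j)) (fst (snd j))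
                                   - q (fst (snd j)) * nu1 m b (q (snd (snd j))) * nu2 m b (q (fst j)) / nu1 m b (qs^2))"
definition XC2 where "XC2 m b qs R C q j = R (fst (snd j)) (snd (snd j)) * (nu1 m b (C (fst j) (snd (snd j))) - nu1 m b (q (fst j)) * nu1 m b (q (snd (snd j))) / nu1 m b (qs^2))"
definition Xq where "Xq m b qs R C q j = R (fst j) (snd (snd j)) * (q (snd (snd j)) * nu2 m b (C (fst j) (snd (snd j)))
                                   - qs^2 * nu1 m b (q (snd (snd j))) * nu2 m b (q (fst j)) / nu1 m b (qs^2))"
definition XK where "XK m b qs R C q j = R (fst j) (snd (snd j)) * (psi m b (C (fst j) (snd (snd j))) - psi m b (q (fst j)) * nu1 m b (q (snd (snd j))) / nu1 m b (qs^2))"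

lemma good_cong: "Good S X Y \<Longrightarrow> (\<And>i. X i = X' i) \<Longrightarrow> (\<And>i. Y i = Y' i) \<Longrightarrow> Good S X' Y'"
proof -
  assume "Good S X Y" "\<And>i. X i = X' i" "\<And>i. Y i = Y' i"
  then have "X = X'" "Y = Y'" by auto
  with \<open>Good S X Y\<close> show ?thesis by simp
qed

context one_sol begin

lemma dR': "(s, t) \<in> triangle T \<Longrightarrow> ((\<lambda>s'. R s' t) has_real_derivative rR m b fp R C K s t) (at s within {t..T})"
  unfolding rR_def by (rule dR)
lemma dC': "(s, t) \<in> triangle T \<Longrightarrow> ((\<lambda>s'. C s' t) has_real_derivative rC m b qs E G fp R C q K s t) (at s within {t..T})"
  unfolding rC_def by (rule dC)
lemma dq': "s \<in> {0..T} \<Longrightarrow> (q has_real_derivative rq m b qs E G fp R C q K s) (at s within {0..T})"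
  unfolding rq_def by (rule dq)
lemma dK': "s \<in> {0..T} \<Longrightarrow> (K has_real_derivative rK m b qs E G fp R C q K s) (at s within {0..T})"
  unfolding rK_def by (rule dK)

end

locale two = s1: one_sol m b qs E G T qo fp R1 C1 q1 K1 H1 + s2: one_sol m b qs E G T qo fp R2 C2 q2 K2 H2
  for m b qs E G T qo fp R1 C1 q1 K1 H1 R2 C2 q2 K2 H2 +
  assumes lip: "\<forall>Rr. \<exists>L. L-lipschitz_on {0..Rr} fp"
begin

definition Dif :: "real \<Rightarrow> real \<Rightarrow> bool" where
  "Dif M s \<longleftrightarrow> (\<forall>x y. 0 \<le> y \<and> y \<le> x \<and> x \<le> s \<and> x \<le> T \<longrightarrow> \<bar>R1 x y - R2 x y\<bar> \<le> M \<and> \<bar>C1 x y - C2 x y\<bar> \<le> M)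
     \<and> (\<forall>x. 0 \<le> x \<and> x \<le> s \<and> x \<le> T \<longrightarrow> \<bar>q1 x - q2 x\<bar> \<le> M \<and> \<bar>K1 x - K2 x\<bar> \<le> M)"

lemma Dif_mono: "Dif M s \<Longrightarrow> s' \<le> s \<Longrightarrow> Dif M s'"
  unfolding Dif_def by auto

definition Base :: "real \<Rightarrow> (real \<times> real \<times> real) set" where
  "Base M = {i. Dif M (fst i) \<and> 0 \<le> fst (snd i) \<and> fst (snd i) \<le> fst i \<and> fst i \<le> T \<and> 0 \<le> snd (snd i) \<and> snd (snd i) \<le> fst i}"
definition BaseR :: "real \<Rightarrow> (real \<times> real \<times> real) set" where
  "BaseR M = {i\<in>Base M. fst (snd i) \<le> snd (snd i)}"
definition BaseT :: "real \<Rightarrow> (real \<times> real \<times> real) set" where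
  "BaseT M = {i\<in>Base M. snd (snd i) \<le> fst (snd i)}"

lemma bnd2: "\<exists>B\<ge>0. (\<forall>s t. (s, t) \<in> triangle T \<longrightarrow> \<bar>R1 s t\<bar> \<le> B \<and> \<bar>C1 s t\<bar> \<le> B \<and> \<bar>R2 s t\<bar> \<le> B \<and> \<bar>C2 s t\<bar> \<le> B)
   \<and> (\<forall>s\<in>{0..T}. \<bar>q1 s\<bar> \<le> B \<and> \<bar>K1 s\<bar> \<le> B \<and> \<bar>q2 s\<bar> \<le> B \<and> \<bar>K2 s\<bar> \<le> B)"
proof -
  obtain B1 where B1: "B1 \<ge> 0" "\<forall>s t. (s, t) \<in> triangle T \<longrightarrow> \<bar>R1 s t\<bar> \<le> B1 \<and> \<bar>C1 s t\<bar> \<le> B1" "\<forall>s\<in>{0..T}. \<bar>q1 s\<bar> \<le> B1 \<and> \<bar>K1 s\<bar> \<le> B1"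
    using s1.bnd by blast
  obtain B2 where B2: "B2 \<ge> 0" "\<forall>s t. (s, t) \<in> triangle T \<longrightarrow> \<bar>R2 s t\<bar> \<le> B2 \<and> \<bar>C2 s t\<bar> \<le> B2" "\<forall>s\<in>{0..T}. \<bar>q2 s\<bar> \<le> B2 \<and> \<bar>K2 s\<bar> \<le> B2"
    using s2.bnd by blast
  show ?thesis
    apply (rule exI[of _ "B1 + B2"])
    using B1 B2 by force
qed

lemma gR:
  assumes "\<And>M i. M \<ge> 0 \<Longrightarrow> i \<in> S M \<Longrightarrow> \<exists>s. Dif M s \<and> 0 \<le> c i \<and> c i \<le> a i \<and> a i \<le> s \<and> a i \<le> T"
  shows "Good S (\<lambda>i. R1 (a i) (c i)) (\<lambda>i. R2 (a i) (c i))"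
proof -
  obtain B where B: "B \<ge> 0" "\<forall>s t. (s, t) \<in> triangle T \<longrightarrow> \<bar>R1 s t\<bar> \<le> B \<and> \<bar>C1 s t\<bar> \<le> B \<and> \<bar>R2 s t\<bar> \<le> B \<and> \<bar>C2 s t\<bar> \<le> B"
    using bnd2 by blast
  show ?thesis
  proof (rule GoodI[of B 1])
    fix M i assume "M \<ge> 0" "i \<in> S M"
    from assms[OF this] obtain s where "Dif M s" "0 \<le> c i" "c i \<le> a i" "a i \<le> s" "a i \<le> T" by blast
    then show "\<bar>R1 (a i) (c i)\<bar> \<le> B \<and> \<bar>R2 (a i) (c i)\<bar> \<le> B \<and> \<bar>R1 (a i) (c i) - R2 (a i) (c i)\<bar> \<le> 1 * M"
      using B unfolding Dif_def triangle_def by auto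
  qed (use B in auto)
qed

lemma gC:
  assumes "\<And>M i. M \<ge> 0 \<Longrightarrow> i \<in> S M \<Longrightarrow> \<exists>s. Dif M s \<and> 0 \<le> c i \<and> c i \<le> a i \<and> a i \<le> s \<and> a i \<le> T"
  shows "Good S (\<lambda>i. C1 (a i) (c i)) (\<lambda>i. C2 (a i) (c i))"
proof -
  obtain B where B: "B \<ge> 0" "\<forall>s t. (s, t) \<in> triangle T \<longrightarrow> \<bar>R1 s t\<bar> \<le> B \<and> \<bar>C1 s t\<bar> \<le> B \<and> \<bar>R2 s t\<bar> \<le> B \<and> \<bar>C2 s t\<bar> \<le> B"
    using bnd2 by blast
  show ?thesis
  proof (rule GoodI[of B 1])
    fix M i assume "M \<ge> 0" "i \<in> S M"
    from assms[OF this] obtain s where "Dif M s" "0 \<le> c i" "c i \<le> a i" "a i \<le> s" "a i \<le> T" by blast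
    then show "\<bar>C1 (a i) (c i)\<bar> \<le> B \<and> \<bar>C2 (a i) (c i)\<bar> \<le> B \<and> \<bar>C1 (a i) (c i) - C2 (a i) (c i)\<bar> \<le> 1 * M"
      using B unfolding Dif_def triangle_def by auto
  qed (use B in auto)
qed

lemma gq:
  assumes "\<And>M i. M \<ge> 0 \<Longrightarrow> i \<in> S M \<Longrightarrow> \<exists>s. Dif M s \<and> 0 \<le> a i \<and> a i \<le> s \<and> a i \<le> T"
  shows "Good S (\<lambda>i. q1 (a i)) (\<lambda>i. q2 (a i))"
proof -
  obtain B where B: "B \<ge> 0" "\<forall>s\<in>{0..T}. \<bar>q1 s\<bar> \<le> B \<and> \<bar>K1 s\<bar> \<le> B \<and> \<bar>q2 s\<bar> \<le> B \<and> \<bar>K2 s\<bar> \<le> B"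
    using bnd2 by blast
  show ?thesis
  proof (rule GoodI[of B 1])
    fix M i assume "M \<ge> 0" "i \<in> S M"
    from assms[OF this] obtain s where "Dif M s" "0 \<le> a i" "a i \<le> s" "a i \<le> T" by blast
    then show "\<bar>q1 (a i)\<bar> \<le> B \<and> \<bar>q2 (a i)\<bar> \<le> B \<and> \<bar>q1 (a i) - q2 (a i)\<bar> \<le> 1 * M"
      using B unfolding Dif_def by auto
  qed (use B in auto)
qed

lemma gK:
  assumes "\<And>M i. M \<ge> 0 \<Longrightarrow> i \<in> S M \<Longrightarrow> \<exists>s. Dif M s \<and> 0 \<le> a i \<and> a i \<le> s \<and> a i \<le> T"
  shows "Good S (\<lambda>i. K1 (a i)) (\<lambda>i. K2 (a i))"
proof -
  obtain B where B: "B \<ge> 0" "\<forall>s\<in>{0..T}. \<bar>q1 s\<bar> \<le> B \<and> \<bar>K1 s\<bar> \<le> B \<and> \<bar>q2 s\<bar> \<le> B \<and> \<bar>K2 s\<bar> \<le> B"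
    using bnd2 by blast
  show ?thesis
  proof (rule GoodI[of B 1])
    fix M i assume "M \<ge> 0" "i \<in> S M"
    from assms[OF this] obtain s where "Dif M s" "0 \<le> a i" "a i \<le> s" "a i \<le> T" by blast
    then show "\<bar>K1 (a i)\<bar> \<le> B \<and> \<bar>K2 (a i)\<bar> \<le> B \<and> \<bar>K1 (a i) - K2 (a i)\<bar> \<le> 1 * M"
      using B unfolding Dif_def by auto
  qed (use B in auto)
qed

lemma gCsym:
  assumes "\<And>M i. M \<ge> 0 \<Longrightarrow> i \<in> S M \<Longrightarrow> \<exists>s. Dif M s \<and> 0 \<le> a i \<and> a i \<le> s \<and> a i \<le> T \<and> 0 \<le> c i \<and> c i \<le> s \<and> c i \<le> T"
  shows "Good S (\<lambda>i. Csym C1 (a i) (c i)) (\<lambda>i. Csym C2 (a i) (c i))"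
  unfolding Csym_eq
proof (rule gC)
  fix M i assume "M \<ge> 0" "i \<in> S M"
  from assms[OF this] obtain s where "Dif M s \<and> 0 \<le> a i \<and> a i \<le> s \<and> a i \<le> T \<and> 0 \<le> c i \<and> c i \<le> s \<and> c i \<le> T" by blast
  then show "\<exists>s. Dif M s \<and> 0 \<le> min (a i) (c i) \<and> min (a i) (c i) \<le> max (a i) (c i) \<and> max (a i) (c i) \<le> s \<and> max (a i) (c i) \<le> T"
    by (intro exI[of _ s]) auto
qed

lemma gfp:
  assumes "\<And>M i. M \<ge> 0 \<Longrightarrow> i \<in> S M \<Longrightarrow> \<exists>s. Dif M s \<and> 0 \<le> a i \<and> a i \<le> s \<and> a i \<le> T"
  shows "Good S (\<lambda>i. fp (K1 (a i))) (\<lambda>i. fp (K2 (a i)))"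
proof (rule good_fp[OF lip gK[OF assms]])
  fix M i assume "M \<ge> 0" "i \<in> S M"
  from assms[OF this] show "0 \<le> K1 (a i) \<and> 0 \<le> K2 (a i)"
    using s1.Knn s2.Knn by auto
qed

lemma gnu1: "Good S X Y \<Longrightarrow> Good S (\<lambda>i. nu1 m b (X i)) (\<lambda>i. nu1 m b (Y i))"
  by (rule good_LL[OF LL_nu1])
lemma gnu2: "Good S X Y \<Longrightarrow> Good S (\<lambda>i. nu2 m b (X i)) (\<lambda>i. nu2 m b (Y i))"
  by (rule good_LL[OF LL_nu2])
lemma gpsi: "Good S X Y \<Longrightarrow> Good S (\<lambda>i. psi m b (X i)) (\<lambda>i. psi m b (Y i))"
  by (rule good_LL[OF LL_psi])
lemma gvs: "Good S X Y \<Longrightarrow> Good S (\<lambda>i. vstar1 m b qs E G (X i)) (\<lambda>i. vstar1 m b qs E G (Y i))"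
  by (rule good_LL[OF LL_vstar1])

lemmas gintros = good_add good_diff good_mult good_minus good_divc good_const gnu1 gnu2 gpsi gvs gfp gR gC gq gK gCsym

lemma G_XR: "Good BaseR (XR m b R1 C1) (XR m b R2 C2)"
  unfolding XR_def by (intro gintros; auto simp: BaseR_def Base_def)

end


context two begin

lemma G_XC1: "Good Base (XC1 m b qs R1 C1 q1) (XC1 m b qs R2 C2 q2)"
  unfolding XC1_def by (intro gintros; auto simp: Base_def)
lemma G_XC2: "Good BaseT (XC2 m b qs R1 C1 q1) (XC2 m b qs R2 C2 q2)"
  unfolding XC2_def by (intro gintros; auto simp: BaseT_def Base_def)
lemma G_Xq: "Good Base (Xq m b qs R1 C1 q1) (Xq m b qs R2 C2 q2)"
  unfolding Xq_def by (intro gintros; auto simp: Base_def)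
lemma G_XK: "Good Base (XK m b qs R1 C1 q1) (XK m b qs R2 C2 q2)"
  unfolding XK_def by (intro gintros; auto simp: Base_def)

lemma G_IR: "Good Base (\<lambda>i. integral {fst (snd i)..fst i} (\<lambda>v. XR m b R1 C1 (fst i, fst (snd i), v)))
                      (\<lambda>i. integral {fst (snd i)..fst i} (\<lambda>v. XR m b R2 C2 (fst i, fst (snd i), v)))"
proof (rule good_int[OF G_XR, of "\<bar>T\<bar>"])
  fix M i assume "0 \<le> M" "i \<in> Base M"
  then show "(\<forall>v\<in>{fst (snd i)..fst i}. (fst i, fst (snd i), v) \<in> BaseR M) \<and>
         (\<lambda>v. XR m b R1 C1 (fst i, fst (snd i), v)) integrable_on {fst (snd i)..fst i} \<and>
         (\<lambda>v. XR m b R2 C2 (fst i, fst (snd i), v)) integrable_on {fst (snd i)..fst i} \<and>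
         fst i - fst (snd i) \<le> \<bar>T\<bar>"
    using s1.intR[of "fst i" "fst (snd i)"] s2.intR[of "fst i" "fst (snd i)"]
    by (auto simp: Base_def BaseR_def XR_def triangle_def)
qed auto

lemma G_IC1: "Good Base (\<lambda>i. integral {0..fst i} (\<lambda>v. XC1 m b qs R1 C1 q1 (fst i, fst (snd i), v)))
                      (\<lambda>i. integral {0..fst i} (\<lambda>v. XC1 m b qs R2 C2 q2 (fst i, fst (snd i), v)))"
proof (rule good_int[OF G_XC1, of "\<bar>T\<bar>"])
  fix M i assume "0 \<le> M" "i \<in> Base M"
  then show "(\<forall>v\<in>{0..fst i}. (fst i, fst (snd i), v) \<in> Base M) \<and>
         (\<lambda>v. XC1 m b qs R1 C1 q1 (fst i, fst (snd i), v)) integrable_on {0..fst i} \<and>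
         (\<lambda>v. XC1 m b qs R2 C2 q2 (fst i, fst (snd i), v)) integrable_on {0..fst i} \<and>
         fst i - 0 \<le> \<bar>T\<bar>"
    using s1.intC1[of "fst i" "fst (snd i)"] s2.intC1[of "fst i" "fst (snd i)"]
    by (auto simp: Base_def XC1_def triangle_def)
qed auto

lemma G_IC2: "Good Base (\<lambda>i. integral {0..fst (snd i)} (\<lambda>v. XC2 m b qs R1 C1 q1 (fst i, fst (snd i), v)))
                      (\<lambda>i. integral {0..fst (snd i)} (\<lambda>v. XC2 m b qs R2 C2 q2 (fst i, fst (snd i), v)))"
proof (rule good_int[OF G_XC2, of "\<bar>T\<bar>"])
  fix M i assume "0 \<le> M" "i \<in> Base M"
  then show "(\<forall>v\<in>{0..fst (snd i)}. (fst i, fst (snd i), v) \<in> BaseT M) \<and>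
         (\<lambda>v. XC2 m b qs R1 C1 q1 (fst i, fst (snd i), v)) integrable_on {0..fst (snd i)} \<and>
         (\<lambda>v. XC2 m b qs R2 C2 q2 (fst i, fst (snd i), v)) integrable_on {0..fst (snd i)} \<and>
         fst (snd i) - 0 \<le> \<bar>T\<bar>"
    using s1.intC2[of "fst i" "fst (snd i)"] s2.intC2[of "fst i" "fst (snd i)"]
    by (auto simp: Base_def BaseT_def XC2_def triangle_def)
qed auto

lemma G_Iq: "Good Base (\<lambda>i. integral {0..fst i} (\<lambda>v. Xq m b qs R1 C1 q1 (fst i, fst (snd i), v)))
                      (\<lambda>i. integral {0..fst i} (\<lambda>v. Xq m b qs R2 C2 q2 (fst i, fst (snd i), v)))"
proof (rule good_int[OF G_Xq, of "\<bar>T\<bar>"])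
  fix M i assume "0 \<le> M" "i \<in> Base M"
  then show "(\<forall>v\<in>{0..fst i}. (fst i, fst (snd i), v) \<in> Base M) \<and>
         (\<lambda>v. Xq m b qs R1 C1 q1 (fst i, fst (snd i), v)) integrable_on {0..fst i} \<and>
         (\<lambda>v. Xq m b qs R2 C2 q2 (fst i, fst (snd i), v)) integrable_on {0..fst i} \<and>
         fst i - 0 \<le> \<bar>T\<bar>"
    using s1.intq[of "fst i"] s2.intq[of "fst i"]
    by (auto simp: Base_def Xq_def triangle_def)
qed auto

lemma G_IK: "Good Base (\<lambda>i. integral {0..fst i} (\<lambda>v. XK m b qs R1 C1 q1 (fst i, fst (snd i), v)))
                      (\<lambda>i. integral {0..fst i} (\<lambda>v. XK m b qs R2 C2 q2 (fst i, fst (snd i), v)))"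
proof (rule good_int[OF G_XK, of "\<bar>T\<bar>"])
  fix M i assume "0 \<le> M" "i \<in> Base M"
  then show "(\<forall>v\<in>{0..fst i}. (fst i, fst (snd i), v) \<in> Base M) \<and>
         (\<lambda>v. XK m b qs R1 C1 q1 (fst i, fst (snd i), v)) integrable_on {0..fst i} \<and>
         (\<lambda>v. XK m b qs R2 C2 q2 (fst i, fst (snd i), v)) integrable_on {0..fst i} \<and>
         fst i - 0 \<le> \<bar>T\<bar>"
    using s1.intK[of "fst i"] s2.intK[of "fst i"]
    by (auto simp: Base_def XK_def triangle_def)
qed auto

lemma G_rR: "Good Base (\<lambda>i. rR m b fp R1 C1 K1 (fst i) (fst (snd i))) (\<lambda>i. rR m b fp R2 C2 K2 (fst i) (fst (snd i)))"
proof (rule good_cong)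
  show "Good Base (\<lambda>i. - fp (K1 (fst i)) * R1 (fst i) (fst (snd i)) + integral {fst (snd i)..fst i} (\<lambda>v. XR m b R1 C1 (fst i, fst (snd i), v)))
                      (\<lambda>i. - fp (K2 (fst i)) * R2 (fst i) (fst (snd i)) + integral {fst (snd i)..fst i} (\<lambda>v. XR m b R2 C2 (fst i, fst (snd i), v)))"
    by (intro good_add G_IR good_mult good_minus gfp gR; auto simp: Base_def)
qed (simp_all add: rR_def XR_def)

lemma G_rC: "Good Base (\<lambda>i. rC m b qs E G fp R1 C1 q1 K1 (fst i) (fst (snd i))) (\<lambda>i. rC m b qs E G fp R2 C2 q2 K2 (fst i) (fst (snd i)))"
proof (rule good_cong)
  show "Good Base (\<lambda>i. - fp (K1 (fst i)) * C1 (fst i) (fst (snd i))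
      + integral {0..fst i} (\<lambda>v. XC1 m b qs R1 C1 q1 (fst i, fst (snd i), v))
      + integral {0..fst (snd i)} (\<lambda>v. XC2 m b qs R1 C1 q1 (fst i, fst (snd i), v))
      + q1 (fst (snd i)) * vstar1 m b qs E G (q1 (fst i)))
                  (\<lambda>i. - fp (K2 (fst i)) * C2 (fst i) (fst (snd i))
      + integral {0..fst i} (\<lambda>v. XC1 m b qs R2 C2 q2 (fst i, fst (snd i), v))
      + integral {0..fst (snd i)} (\<lambda>v. XC2 m b qs R2 C2 q2 (fst i, fst (snd i), v))
      + q2 (fst (snd i)) * vstar1 m b qs E G (q2 (fst i)))"
    by (intro good_add G_IC1 G_IC2 good_mult good_minus gfp gC gq gvs; auto simp: Base_def)
qed (simp_all add: rC_def XC1_def XC2_def)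

lemma G_rq: "Good Base (\<lambda>i. rq m b qs E G fp R1 C1 q1 K1 (fst i)) (\<lambda>i. rq m b qs E G fp R2 C2 q2 K2 (fst i))"
proof (rule good_cong)
  show "Good Base (\<lambda>i. - fp (K1 (fst i)) * q1 (fst i)
      + integral {0..fst i} (\<lambda>v. Xq m b qs R1 C1 q1 (fst i, fst (snd i), v))
      + qs^2 * vstar1 m b qs E G (q1 (fst i)))
                  (\<lambda>i. - fp (K2 (fst i)) * q2 (fst i)
      + integral {0..fst i} (\<lambda>v. Xq m b qs R2 C2 q2 (fst i, fst (snd i), v))
      + qs^2 * vstar1 m b qs E G (q2 (fst i)))"
    by (intro good_add G_Iq good_mult good_minus good_const gfp gq gvs; auto simp: Base_def)
qed (simp_all add: rq_def Xq_def)

lemma G_rK: "Good Base (\<lambda>i. rK m b qs E G fp R1 C1 q1 K1 (fst i)) (\<lambda>i. rK m b qs E G fp R2 C2 q2 K2 (fst i))"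
proof (rule good_cong)
  show "Good Base (\<lambda>i. 1 - 2 * fp (K1 (fst i)) * K1 (fst i)
      + 2 * integral {0..fst i} (\<lambda>v. XK m b qs R1 C1 q1 (fst i, fst (snd i), v))
      + 2 * q1 (fst i) * vstar1 m b qs E G (q1 (fst i)))
                  (\<lambda>i. 1 - 2 * fp (K2 (fst i)) * K2 (fst i)
      + 2 * integral {0..fst i} (\<lambda>v. XK m b qs R2 C2 q2 (fst i, fst (snd i), v))
      + 2 * q2 (fst i) * vstar1 m b qs E G (q2 (fst i)))"
    by (intro good_add good_diff G_IK good_mult good_const gfp gq gK gvs; auto simp: Base_def)
qed (simp_all add: rK_def XK_def)

end


lemma small_pow: fixes x c :: real assumes "\<And>n. x \<le> c / 2^n" shows "x \<le> 0"
proof (rule ccontr)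
  assume "\<not> x \<le> 0" then have x: "x > 0" by simp
  obtain n where n: "c / x < 2^n" using real_arch_pow[of 2 "c / x"] by auto
  then have "c < 2^n * x" using x by (simp add: divide_less_eq)
  then have "c / 2^n < x" by (simp add: divide_less_eq mult.commute)
  with assms[of n] show False by simp
qed

lemma abs_tr: "\<bar>a\<bar> \<le> \<bar>a - b\<bar> + \<bar>b::real\<bar>"
  using abs_triangle_ineq[of "a - b" b] by simp

context two begin

lemma Lip: "\<exists>L\<ge>0. \<forall>M\<ge>0. \<forall>s t. Dif M s \<and> 0 \<le> t \<and> t \<le> s \<and> s \<le> T \<longrightarrow>
   \<bar>rR m b fp R1 C1 K1 s t - rR m b fp R2 C2 K2 s t\<bar> \<le> L * M \<and>
   \<bar>rC m b qs E G fp R1 C1 q1 K1 s t - rC m b qs E G fp R2 C2 q2 K2 s t\<bar> \<le> L * M \<and>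
   \<bar>rq m b qs E G fp R1 C1 q1 K1 s - rq m b qs E G fp R2 C2 q2 K2 s\<bar> \<le> L * M \<and>
   \<bar>rK m b qs E G fp R1 C1 q1 K1 s - rK m b qs E G fp R2 C2 q2 K2 s\<bar> \<le> L * M"
proof -
  obtain A1 L1 where 1: "L1 \<ge> 0" "\<And>M i. M \<ge> 0 \<Longrightarrow> i \<in> Base M \<Longrightarrow> \<bar>rR m b fp R1 C1 K1 (fst i) (fst (snd i)) - rR m b fp R2 C2 K2 (fst i) (fst (snd i))\<bar> \<le> L1 * M"
    using GoodE[OF G_rR] by metis
  obtain A2 L2 where 2: "L2 \<ge> 0" "\<And>M i. M \<ge> 0 \<Longrightarrow> i \<in> Base M \<Longrightarrow> \<bar>rC m b qs E G fp R1 C1 q1 K1 (fst i) (fst (snd i)) - rC m b qs E G fp R2 C2 q2 K2 (fst i) (fst (snd i))\<bar> \<le> L2 * M"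
    using GoodE[OF G_rC] by metis
  obtain A3 L3 where 3: "L3 \<ge> 0" "\<And>M i. M \<ge> 0 \<Longrightarrow> i \<in> Base M \<Longrightarrow> \<bar>rq m b qs E G fp R1 C1 q1 K1 (fst i) - rq m b qs E G fp R2 C2 q2 K2 (fst i)\<bar> \<le> L3 * M"
    using GoodE[OF G_rq] by metis
  obtain A4 L4 where 4: "L4 \<ge> 0" "\<And>M i. M \<ge> 0 \<Longrightarrow> i \<in> Base M \<Longrightarrow> \<bar>rK m b qs E G fp R1 C1 q1 K1 (fst i) - rK m b qs E G fp R2 C2 q2 K2 (fst i)\<bar> \<le> L4 * M"
    using GoodE[OF G_rK] by metis
  show ?thesis
  proof (intro exI[of _ "L1 + L2 + L3 + L4"] conjI allI impI)
    fix M s t assume M: "M \<ge> 0" and st: "Dif M s \<and> 0 \<le> t \<and> t \<le> s \<and> s \<le> T"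
    then have i: "(s, t, 0) \<in> Base M" by (auto simp: Base_def)
    have le: "L1 * M \<le> (L1 + L2 + L3 + L4) * M" "L2 * M \<le> (L1 + L2 + L3 + L4) * M"
      "L3 * M \<le> (L1 + L2 + L3 + L4) * M" "L4 * M \<le> (L1 + L2 + L3 + L4) * M"
      using 1(1) 2(1) 3(1) 4(1) M by (auto intro!: mult_right_mono)
    show "\<bar>rR m b fp R1 C1 K1 s t - rR m b fp R2 C2 K2 s t\<bar> \<le> (L1 + L2 + L3 + L4) * M"
      using 1(2)[OF M i] le by simp
    show "\<bar>rC m b qs E G fp R1 C1 q1 K1 s t - rC m b qs E G fp R2 C2 q2 K2 s t\<bar> \<le> (L1 + L2 + L3 + L4) * M"
      using 2(2)[OF M i] le by simp
    show "\<bar>rq m b qs E G fp R1 C1 q1 K1 s - rq m b qs E G fp R2 C2 q2 K2 s\<bar> \<le> (L1 + L2 + L3 + L4) * M"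
      using 3(2)[OF M i] le by simp
    show "\<bar>rK m b qs E G fp R1 C1 q1 K1 s - rK m b qs E G fp R2 C2 q2 K2 s\<bar> \<le> (L1 + L2 + L3 + L4) * M"
      using 4(2)[OF M i] le by simp
  qed (use 1 2 3 4 in auto)
qed

lemma step: "\<exists>\<delta>>0. \<forall>a\<ge>0. Dif 0 a \<longrightarrow> Dif 0 (a + \<delta>)"
proof -
  obtain L where L: "L \<ge> 0" "\<And>M s t. M \<ge> 0 \<Longrightarrow> Dif M s \<Longrightarrow> 0 \<le> t \<Longrightarrow> t \<le> s \<Longrightarrow> s \<le> T \<Longrightarrow>
   \<bar>rR m b fp R1 C1 K1 s t - rR m b fp R2 C2 K2 s t\<bar> \<le> L * M \<and>
   \<bar>rC m b qs E G fp R1 C1 q1 K1 s t - rC m b qs E G fp R2 C2 q2 K2 s t\<bar> \<le> L * M \<and>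
   \<bar>rq m b qs E G fp R1 C1 q1 K1 s - rq m b qs E G fp R2 C2 q2 K2 s\<bar> \<le> L * M \<and>
   \<bar>rK m b qs E G fp R1 C1 q1 K1 s - rK m b qs E G fp R2 C2 q2 K2 s\<bar> \<le> L * M"
    using Lip by blast
  define \<delta> where "\<delta> = 1 / (4 * (L + 1))"
  have dpos: "\<delta> > 0" using L(1) by (simp add: \<delta>_def)
  have Ld: "L * \<delta> \<le> 1/4" using L(1) by (simp add: \<delta>_def field_simps)
  have key: "M * (L * (x - p)) \<le> M / 4" if "M \<ge> 0" "0 \<le> x - p" "x - p \<le> \<delta>" for M x p
  proof -
    have "L * (x - p) \<le> L * \<delta>" using that L(1) by (intro mult_left_mono) auto
    then have "L * (x - p) \<le> 1/4" using Ld by linarith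
    then show ?thesis using that(1) mult_left_mono by fastforce
  qed
  have halve: "Dif (M/2) (a + \<delta>)" if a: "a \<ge> 0" "Dif 0 a" and M: "M \<ge> 0" "Dif M (a + \<delta>)" for a M
  proof -
    have DM: "Dif M s" if "s \<le> a + \<delta>" for s using Dif_mono[OF M(2) that] .
    have qK: "\<bar>q1 x - q2 x\<bar> \<le> M/4 \<and> \<bar>K1 x - K2 x\<bar> \<le> M/4" if x: "0 \<le> x" "x \<le> a + \<delta>" "x \<le> T" for x
    proof (cases "x \<le> a")
      case True then show ?thesis using a(2) x M(1) unfolding Dif_def by force
    next
      case False
      have z: "q1 a - q2 a = 0" "K1 a - K2 a = 0" using a False x unfolding Dif_def by force+
      have sub: "{a..x} \<subseteq> {0..T}" using a x by auto
      have bd: "\<bar>rq m b qs E G fp R1 C1 q1 K1 s - rq m b qs E G fp R2 C2 q2 K2 s\<bar> \<le> L * M \<and>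
          \<bar>rK m b qs E G fp R1 C1 q1 K1 s - rK m b qs E G fp R2 C2 q2 K2 s\<bar> \<le> L * M" if "s \<in> {a..x}" for s
        using L(2)[OF M(1) DM[of s], of 0] that x a by auto
      have "\<bar>(q1 x - q2 x) - (q1 a - q2 a)\<bar> \<le> (L * M) * (x - a)"
        by (rule mvt_diff[where da = "rq m b qs E G fp R1 C1 q1 K1" and db = "rq m b qs E G fp R2 C2 q2 K2"])
           (use False bd sub in \<open>auto intro: DERIV_subset[OF s1.dq'] DERIV_subset[OF s2.dq']\<close>)
      moreover have "\<bar>(K1 x - K2 x) - (K1 a - K2 a)\<bar> \<le> (L * M) * (x - a)"
        by (rule mvt_diff[where da = "rK m b qs E G fp R1 C1 q1 K1" and db = "rK m b qs E G fp R2 C2 q2 K2"])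
           (use False bd sub in \<open>auto intro: DERIV_subset[OF s1.dK'] DERIV_subset[OF s2.dK']\<close>)
      moreover have "(L * M) * (x - a) \<le> M / 4" using key[of M x a] M False x by (simp add: algebra_simps)
      ultimately show ?thesis using z by simp
    qed
    have RC: "\<bar>R1 x y - R2 x y\<bar> \<le> M/2 \<and> \<bar>C1 x y - C2 x y\<bar> \<le> M/2"
      if x: "0 \<le> y" "y \<le> x" "x \<le> a + \<delta>" "x \<le> T" for x y
    proof (cases "x \<le> a")
      case True then show ?thesis using a(2) x M(1) unfolding Dif_def by force
    next
      case False
      define p where "p = max a y"
      have p: "p \<le> x" "y \<le> p" "a \<le> p" "x - p \<le> \<delta>" using False x by (auto simp: p_def)
      have z: "\<bar>R1 p y - R2 p y\<bar> \<le> M/4 \<and> \<bar>C1 p y - C2 p y\<bar> \<le> M/4"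
      proof (cases "y \<le> a")
        case True then have "p = a" by (simp add: p_def)
        then show ?thesis using a(2) True x False M(1) unfolding Dif_def by force
      next
        case False then have "p = y" by (simp add: p_def)
        moreover have "y \<in> {0..T}" using x by auto
        ultimately show ?thesis using qK[of y] x s1.diag[of y] s2.diag[of y] M(1) by auto
      qed
      have sub: "{p..x} \<subseteq> {y..T}" using p x by auto
      have tri: "(s, y) \<in> triangle T" if "s \<in> {p..x}" for s using that p x by (auto simp: triangle_def)
      have bd: "\<bar>rR m b fp R1 C1 K1 s y - rR m b fp R2 C2 K2 s y\<bar> \<le> L * M \<and>
          \<bar>rC m b qs E G fp R1 C1 q1 K1 s y - rC m b qs E G fp R2 C2 q2 K2 s y\<bar> \<le> L * M" if "s \<in> {p..x}" for s
        using L(2)[OF M(1) DM[of s], of y] that x p by auto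
      have "\<bar>(R1 x y - R2 x y) - (R1 p y - R2 p y)\<bar> \<le> (L * M) * (x - p)"
        by (rule mvt_diff[where ga = "\<lambda>s. R1 s y" and gb = "\<lambda>s. R2 s y" and da = "\<lambda>s. rR m b fp R1 C1 K1 s y" and db = "\<lambda>s. rR m b fp R2 C2 K2 s y"])
           (use p bd sub tri in \<open>auto intro: DERIV_subset[OF s1.dR'] DERIV_subset[OF s2.dR']\<close>)
      moreover have "\<bar>(C1 x y - C2 x y) - (C1 p y - C2 p y)\<bar> \<le> (L * M) * (x - p)"
        by (rule mvt_diff[where ga = "\<lambda>s. C1 s y" and gb = "\<lambda>s. C2 s y" and da = "\<lambda>s. rC m b qs E G fp R1 C1 q1 K1 s y" and db = "\<lambda>s. rC m b qs E G fp R2 C2 q2 K2 s y"])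
           (use p bd sub tri in \<open>auto intro: DERIV_subset[OF s1.dC'] DERIV_subset[OF s2.dC']\<close>)
      moreover have "(L * M) * (x - p) \<le> M / 4" using key[of M x p] M p by (simp add: algebra_simps)
      ultimately show ?thesis using z M(1) abs_tr[of "R1 x y - R2 x y" "R1 p y - R2 p y"] abs_tr[of "C1 x y - C2 x y" "C1 p y - C2 p y"] by linarith
    qed
    show ?thesis unfolding Dif_def using qK RC M(1) by force
  qed
  have "Dif 0 (a + \<delta>)" if a: "a \<ge> 0" "Dif 0 a" for a
  proof -
    obtain B where B: "B \<ge> 0" "\<forall>s t. (s, t) \<in> triangle T \<longrightarrow> \<bar>R1 s t\<bar> \<le> B \<and> \<bar>C1 s t\<bar> \<le> B \<and> \<bar>R2 s t\<bar> \<le> B \<and> \<bar>C2 s t\<bar> \<le> B"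
      "\<forall>s\<in>{0..T}. \<bar>q1 s\<bar> \<le> B \<and> \<bar>K1 s\<bar> \<le> B \<and> \<bar>q2 s\<bar> \<le> B \<and> \<bar>K2 s\<bar> \<le> B"
      using bnd2 by blast
    have D0: "Dif (2 * B) (a + \<delta>)"
      unfolding Dif_def
    proof (rule conjI; intro allI impI)
      fix x y assume "0 \<le> y \<and> y \<le> x \<and> x \<le> a + \<delta> \<and> x \<le> T"
      then have "(x, y) \<in> triangle T" by (auto simp: triangle_def)
      then show "\<bar>R1 x y - R2 x y\<bar> \<le> 2 * B \<and> \<bar>C1 x y - C2 x y\<bar> \<le> 2 * B" using B(2) by force
    next
      fix x assume "0 \<le> x \<and> x \<le> a + \<delta> \<and> x \<le> T"
      then have "x \<in> {0..T}" by auto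
      then show "\<bar>q1 x - q2 x\<bar> \<le> 2 * B \<and> \<bar>K1 x - K2 x\<bar> \<le> 2 * B" using B(3) by force
    qed
    have all: "Dif (2 * B / 2^n) (a + \<delta>)" for n
    proof (induction n)
      case 0 then show ?case using D0 by simp
    next
      case (Suc n)
      have "Dif ((2 * B / 2^n) / 2) (a + \<delta>)" by (rule halve[OF a _ Suc]) (use B(1) in simp)
      then show ?case by (simp add: field_simps)
    qed
    show ?thesis
      unfolding Dif_def
    proof (rule conjI; intro allI impI)
      fix x y assume xy: "0 \<le> y \<and> y \<le> x \<and> x \<le> a + \<delta> \<and> x \<le> T"
      have "\<bar>R1 x y - R2 x y\<bar> \<le> 0" by (rule small_pow[of _ "2*B"]) (use all xy in \<open>auto simp: Dif_def\<close>)
      moreover have "\<bar>C1 x y - C2 x y\<bar> \<le> 0" by (rule small_pow[of _ "2*B"]) (use all xy in \<open>auto simp: Dif_def\<close>)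
      ultimately show "\<bar>R1 x y - R2 x y\<bar> \<le> 0 \<and> \<bar>C1 x y - C2 x y\<bar> \<le> 0" by simp
    next
      fix x assume xy: "0 \<le> x \<and> x \<le> a + \<delta> \<and> x \<le> T"
      have "\<bar>q1 x - q2 x\<bar> \<le> 0" by (rule small_pow[of _ "2*B"]) (use all xy in \<open>auto simp: Dif_def\<close>)
      moreover have "\<bar>K1 x - K2 x\<bar> \<le> 0" by (rule small_pow[of _ "2*B"]) (use all xy in \<open>auto simp: Dif_def\<close>)
      ultimately show "\<bar>q1 x - q2 x\<bar> \<le> 0 \<and> \<bar>K1 x - K2 x\<bar> \<le> 0" by simp
    qed
  qed
  then show ?thesis using dpos by blast
qed

lemma Dif0_all: "Dif 0 T"
proof -
  obtain \<delta> where d: "\<delta> > 0" "\<And>a. a \<ge> 0 \<Longrightarrow> Dif 0 a \<Longrightarrow> Dif 0 (a + \<delta>)" using step by blast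
  have base: "Dif 0 0"
    unfolding Dif_def
  proof (rule conjI; intro allI impI)
    fix x y :: real assume xy: "0 \<le> y \<and> y \<le> x \<and> x \<le> 0 \<and> x \<le> T"
    have x0: "x = 0" "y = 0" using xy by auto
    show "\<bar>R1 x y - R2 x y\<bar> \<le> 0 \<and> \<bar>C1 x y - C2 x y\<bar> \<le> 0"
      using s1.diag[of 0] s2.diag[of 0] s1.init s2.init xy by (simp add: x0)
  next
    fix x :: real assume "0 \<le> x \<and> x \<le> 0 \<and> x \<le> T"
    then have "x = 0" by auto
    then show "\<bar>q1 x - q2 x\<bar> \<le> 0 \<and> \<bar>K1 x - K2 x\<bar> \<le> 0" using s1.init s2.init by auto
  qed
  have n: "Dif 0 (real n * \<delta>)" for n
  proof (induction n)
    case 0 then show ?case using base by simp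
  next
    case (Suc n)
    have "Dif 0 (real n * \<delta> + \<delta>)" by (rule d(2)[OF _ Suc]) (use d(1) in simp)
    then show ?case by (simp add: algebra_simps)
  qed
  obtain n where "T / \<delta> \<le> real n" using real_arch_simple by blast
  then have "T \<le> real n * \<delta>" using d(1) by (simp add: divide_le_eq)
  then show ?thesis using Dif_mono[OF n] by blast
qed

end


theorem proposition3p4:
  fixes m :: nat and b :: "nat \<Rightarrow> real" and qs qo E G T :: real
    and f f' :: "real \<Rightarrow> real"
    and R1 C1 R2 C2 :: "real \<Rightarrow> real \<Rightarrow> real" and q1 K1 H1 q2 K2 H2 :: "real \<Rightarrow> real"
  assumes "m \<ge> 2" and "b m \<noteq> 0" and "qs > 0"
    and "pure_case m b \<Longrightarrow> G = real m * E / qs^2"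
    and "\<forall>r\<ge>0. (f has_real_derivative f' r) (at r within {0..})"
    and "\<forall>Rr. \<exists>L. L-lipschitz_on {0..Rr} f'"
    and "\<exists>A k c. A > 0 \<and> k > real m / 4 \<and> (\<forall>r\<ge>0. f' r - A * r powr (2 * k - 1) \<ge> c)"
    and "\<exists>\<kappa> c. \<forall>r\<ge>0. \<bar>f' r\<bar> * (1 + r) powr (- \<kappa>) \<le> c"
    and "is_solution m b qs E G f' T qo R1 C1 q1 K1 H1"
    and "is_solution m b qs E G f' T qo R2 C2 q2 K2 H2"
  shows "(\<forall>(s, t)\<in>triangle T. R1 s t = R2 s t \<and> C1 s t = C2 s t)
       \<and> (\<forall>s\<in>{0..T}. q1 s = q2 s \<and> K1 s = K2 s \<and> H1 s = H2 s)"
proof -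
  interpret two m b qs E G T qo f' R1 C1 q1 K1 H1 R2 C2 q2 K2 H2
    by (unfold_locales) (use assms(6,9,10) in auto)
  have D: "Dif 0 T" by (rule Dif0_all)
  have RC: "R1 s t = R2 s t \<and> C1 s t = C2 s t" if "(s, t) \<in> triangle T" for s t
    using D that unfolding Dif_def triangle_def by force
  have qK: "q1 s = q2 s \<and> K1 s = K2 s" if "s \<in> {0..T}" for s
    using D that unfolding Dif_def by force
  have H: "H1 s = H2 s" if s: "s \<in> {0..T}" for s
  proof -
    have "integral {0..s} (\<lambda>u. R1 s u * (nu1 m b (C1 s u) - nu1 m b (q1 s) * nu1 m b (q1 u) / nu1 m b (qs^2)))
        = integral {0..s} (\<lambda>u. R2 s u * (nu1 m b (C2 s u) - nu1 m b (q2 s) * nu1 m b (q2 u) / nu1 m b (qs^2)))"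
    proof (rule integral_cong)
      fix u assume "u \<in> {0..s}"
      then have "(s, u) \<in> triangle T" "u \<in> {0..T}" using s by (auto simp: triangle_def)
      then show "R1 s u * (nu1 m b (C1 s u) - nu1 m b (q1 s) * nu1 m b (q1 u) / nu1 m b (qs^2))
        = R2 s u * (nu1 m b (C2 s u) - nu1 m b (q2 s) * nu1 m b (q2 u) / nu1 m b (qs^2))"
        using RC qK[OF s] qK by auto
    qed
    then show ?thesis using s1.Heq[OF s] s2.Heq[OF s] qK[OF s] by simp
  qed
  show ?thesis using RC qK H by auto
qed


end
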